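(* Let $\mathcal T$ be a set of at least two binary trees over $L$, $\sigma$ a leaf ordering, and let $L_0,\dots,L_k$ and $m_0,\dots,m_k$ be as constructed in the context. For any $T\in\mathcal T$ and any $i\in\{0,\dots,k\}$, let $r_i$ be the root (top vertex) of the subtree $T(L_i)$. Then the subtree $T_{r_i}$ contains no leaf $l_j$ with $j<m_i$.
   Context: Trees. Fix a finite label set $L$ containing a distinguished label $\rho$, and let $n=|L\setminus\{\rho\}|$. A (planted, binary phylogenetic) tree $T$ over $L$ is a rooted tree whose top vertex is labeled $\rho$ and has exactly one child $r(T)$ (the root), in which every other non-leaf vertex has exactly two children, and whose leaves are bijectively labeled by $L\setminus\{\rho\}$; vertices are identified with their labels. For a vertex $v$, $T_v$ is the subtree rooted at $v$. For $S\subseteq L$, $T(S)$ is the smallest subtree of $T$ containing all vertices labeled by $S$, and $T|_S$ is obtained from $T(S)$ by suppressing all unlabeled vertices with fewer than two children. OLA vectors. A leaf ordering is a bijection $\sigma:L\setminus\{\rho\}\to\{0,\dots,n-1\}$; write $l_i=\sigma^{-1}(i)$. For a binary tree $T$ whose non-$\rho$ labels lie in $L\setminus\{\rho\}$ and a vertex $v\ne\rho$, let $\mu(v)=\min\{\sigma(l): l\in L(T_v)\setminus\{\rho\}\}$; each leaf $l$ gets index $\sigma(l)$, and each internal vertex $v$ (not a leaf, not $\rho$) with children $v_1,v_2$ gets index $\sigma(v):=-\max\{\mu(v_1),\mu(v_2)\}$. Let $T^i:=T|_{\{\rho,l_0,\dots,l_i\}}$. For $1\le i\le n-1$ let $v_i$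 be the sibling of $l_i$ in $T^i$, and define $OLA(T,\sigma)_i:=\sigma(v_i)$ (index computed in $T^i$). Mismatched indices. For a finite set $\mathcal T$ of at least two binary trees over $L$ and a leaf ordering $\sigma$, the set $M\subseteq\{1,\dots,n-1\}$ of mismatched indices is built by processing $i=1,\dots,n-1$ in increasing order: $i$ is put in $M$ iff either there are $T,T'\in\mathcal T$ with $OLA(T,\sigma)_i\ne OLA(T',\sigma)_i$, or all $OLA(T,\sigma)_i$ ($T\in\mathcal T$) equal a common value $-j$ with $j$ already in $M$. Construction of leaf sets. Write $M=\{m_1<\dots<m_k\}$ and set $m_0:=0$. Let $I_c=\{1,\dots,n-1\}\setminus M$; for $j\in I_c$ all vectors $OLA(T,\sigma)$ have a common value $c_j$ at index $j$. Initialize $L_0=\{\rho,l_0\}$ and $L_i=\{l_{m_i}\}$ for $1\le i\le k$. For a current set $L_i$ define $$span(L_i):=\Big(\bigcup_{l_j\in L_i\setminus\{l_{m_i},\rho\}}\{-j,j\}\Big)\cup\{m_i\}.$$ Then process the indices $j\in I_c$ in increasing order: add $l_j$ to the unique set $L_i$ for which $c_j\in span(L_i)$ (span taken with the current contents of $L_i$). The resulting sets $L_0,\dots,L_k$ partition $L$. *)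

theory Defs
  imports Main
begin

text \<open>Planted binary phylogenetic trees: the top vertex labelled rho is implicit;
  a value of type btree is the subtree rooted at the root r(T) (the unique child of rho).\<close>

datatype 'a btree = Leaf 'a | Node "'a btree" "'a btree"

fun leaves :: "'a btree \<Rightarrow> 'a list" where
  "leaves (Leaf a) = [a]"
| "leaves (Node l r) = leaves l @ leaves r"

definition is_tree_over :: "'a set \<Rightarrow> 'a \<Rightarrow> 'a btree \<Rightarrow> bool" where
  "is_tree_over L \<rho> T \<longleftrightarrow> distinct (leaves T) \<and> set (leaves T) = L - {\<rho>}"

text \<open>Restriction T|_S (rho is always kept as the implicit top vertex):
  take the minimal subtree spanned by S and suppress unary vertices.\<close>
fun restrict :: "'a set \<Rightarrow> 'a btree \<Rightarrow> 'a btree option" where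
  "restrict S (Leaf a) = (if a \<in> S then Some (Leaf a) else None)"
| "restrict S (Node l r) = (case (restrict S l, restrict S r) of
      (None, None) \<Rightarrow> None
    | (Some x, None) \<Rightarrow> Some x
    | (None, Some y) \<Rightarrow> Some y
    | (Some x, Some y) \<Rightarrow> Some (Node x y))"

fun sibling :: "'a \<Rightarrow> 'a btree \<Rightarrow> 'a btree option" where
  "sibling x (Leaf a) = None"
| "sibling x (Node l r) =
     (if l = Leaf x then Some r
      else if r = Leaf x then Some l
      else (case sibling x l of Some s \<Rightarrow> Some s | None \<Rightarrow> sibling x r))"

definition mu :: "('a \<Rightarrow> nat) \<Rightarrow> 'a btree \<Rightarrow> nat" where
  "mu \<sigma> t = Min (\<sigma> ` set (leaves t))"

text \<open>Index of a vertex (given as the subtree rooted at it).\<close>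
fun vidx :: "('a \<Rightarrow> nat) \<Rightarrow> 'a btree \<Rightarrow> int" where
  "vidx \<sigma> (Leaf a) = int (\<sigma> a)"
| "vidx \<sigma> (Node l r) = - int (max (mu \<sigma> l) (mu \<sigma> r))"

definition lab :: "'a set \<Rightarrow> 'a \<Rightarrow> ('a \<Rightarrow> nat) \<Rightarrow> nat \<Rightarrow> 'a" where
  "lab L \<rho> \<sigma> i = inv_into (L - {\<rho>}) \<sigma> i"

definition nleaves :: "'a set \<Rightarrow> 'a \<Rightarrow> nat" where
  "nleaves L \<rho> = card (L - {\<rho>})"

definition ola :: "'a set \<Rightarrow> 'a \<Rightarrow> ('a \<Rightarrow> nat) \<Rightarrow> 'a btree \<Rightarrow> nat \<Rightarrow> int" where
  "ola L \<rho> \<sigma> T i =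
     vidx \<sigma> (the (sibling (lab L \<rho> \<sigma> i) (the (restrict (lab L \<rho> \<sigma> ` {0..i}) T))))"

definition mis_cond :: "'a set \<Rightarrow> 'a \<Rightarrow> ('a \<Rightarrow> nat) \<Rightarrow> 'a btree set \<Rightarrow> nat set \<Rightarrow> nat \<Rightarrow> bool" where
  "mis_cond L \<rho> \<sigma> Ts M i \<longleftrightarrow>
     (\<exists>T\<in>Ts. \<exists>T'\<in>Ts. ola L \<rho> \<sigma> T i \<noteq> ola L \<rho> \<sigma> T' i)
   \<or> (\<exists>j\<in>M. \<forall>T\<in>Ts. ola L \<rho> \<sigma> T i = - int j)"

fun Mset :: "'a set \<Rightarrow> 'a \<Rightarrow> ('a \<Rightarrow> nat) \<Rightarrow> 'a btree set \<Rightarrow> nat \<Rightarrow> nat set" where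
  "Mset L \<rho> \<sigma> Ts 0 = {}"
| "Mset L \<rho> \<sigma> Ts (Suc i) =
     (let M = Mset L \<rho> \<sigma> Ts i in
      if mis_cond L \<rho> \<sigma> Ts M (Suc i) then insert (Suc i) M else M)"

definition mismatched :: "'a set \<Rightarrow> 'a \<Rightarrow> ('a \<Rightarrow> nat) \<Rightarrow> 'a btree set \<Rightarrow> nat set" where
  "mismatched L \<rho> \<sigma> Ts = Mset L \<rho> \<sigma> Ts (nleaves L \<rho> - 1)"

definition mi :: "'a set \<Rightarrow> 'a \<Rightarrow> ('a \<Rightarrow> nat) \<Rightarrow> 'a btree set \<Rightarrow> nat \<Rightarrow> nat" where
  "mi L \<rho> \<sigma> Ts i =
     (if i = 0 then 0 else sorted_list_of_set (mismatched L \<rho> \<sigma> Ts) ! (i - 1))"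

text \<open>Common OLA value c_j for j not mismatched.\<close>
definition cval :: "'a set \<Rightarrow> 'a \<Rightarrow> ('a \<Rightarrow> nat) \<Rightarrow> 'a btree set \<Rightarrow> nat \<Rightarrow> int" where
  "cval L \<rho> \<sigma> Ts j = ola L \<rho> \<sigma> (SOME T. T \<in> Ts) j"

definition span :: "'a set \<Rightarrow> 'a \<Rightarrow> ('a \<Rightarrow> nat) \<Rightarrow> 'a btree set \<Rightarrow> 'a set \<Rightarrow> nat \<Rightarrow> int set" where
  "span L \<rho> \<sigma> Ts S i =
     (\<Union>x \<in> S - {lab L \<rho> \<sigma> (mi L \<rho> \<sigma> Ts i), \<rho>}. {- int (\<sigma> x), int (\<sigma> x)})
     \<union> {int (mi L \<rho> \<sigma> Ts i)}"

definition init_sets :: "'a set \<Rightarrow> 'a \<Rightarrow> ('a \<Rightarrow> nat) \<Rightarrow> 'a btree set \<Rightarrow> nat \<Rightarrow> 'a set" where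
  "init_sets L \<rho> \<sigma> Ts i =
     (if i = 0 then {\<rho>, lab L \<rho> \<sigma> 0} else {lab L \<rho> \<sigma> (mi L \<rho> \<sigma> Ts i)})"

definition cstep :: "'a set \<Rightarrow> 'a \<Rightarrow> ('a \<Rightarrow> nat) \<Rightarrow> 'a btree set \<Rightarrow> (nat \<Rightarrow> 'a set) \<Rightarrow> nat \<Rightarrow> (nat \<Rightarrow> 'a set)" where
  "cstep L \<rho> \<sigma> Ts Ls j =
     (if j \<in> mismatched L \<rho> \<sigma> Ts then Ls
      else (let i = (THE i. i \<le> card (mismatched L \<rho> \<sigma> Ts)
                           \<and> cval L \<rho> \<sigma> Ts j \<in> span L \<rho> \<sigma> Ts (Ls i) i)
            in Ls(i := insert (lab L \<rho> \<sigma> j) (Ls i))))"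

definition leafsets :: "'a set \<Rightarrow> 'a \<Rightarrow> ('a \<Rightarrow> nat) \<Rightarrow> 'a btree set \<Rightarrow> nat \<Rightarrow> 'a set" where
  "leafsets L \<rho> \<sigma> Ts =
     foldl (cstep L \<rho> \<sigma> Ts) (init_sets L \<rho> \<sigma> Ts) [1..<nleaves L \<rho>]"

text \<open>Lowest common ancestor subtree of a nonempty leaf set S (not containing rho).\<close>
fun lca :: "'a set \<Rightarrow> 'a btree \<Rightarrow> 'a btree" where
  "lca S (Leaf a) = Leaf a"
| "lca S (Node l r) =
     (if S \<subseteq> set (leaves l) then lca S l
      else if S \<subseteq> set (leaves r) then lca S r
      else Node l r)"

text \<open>Leaves (other than rho) of T_{r}, where r is the top vertex of T(S):
  if rho is in S then r = rho and T_rho is the whole tree.\<close>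
definition top_subtree_leaves :: "'a \<Rightarrow> 'a set \<Rightarrow> 'a btree \<Rightarrow> 'a set" where
  "top_subtree_leaves \<rho> S T = (if \<rho> \<in> S then set (leaves T) else set (leaves (lca S T)))"

end

theory Submission
  imports Defs
begin


fun subs :: "'a btree \<Rightarrow> 'a btree set" where
  "subs (Leaf a) = {Leaf a}"
| "subs (Node l r) = insert (Node l r) (subs l \<union> subs r)"

abbreviation lv :: "'a btree \<Rightarrow> 'a set" where "lv t \<equiv> set (leaves t)"

lemma self_subs[simp]: "t \<in> subs t" by (cases t) auto

lemma subs_lv: "t' \<in> subs t \<Longrightarrow> lv t' \<subseteq> lv t"
  by (induction t) auto

lemma subs_trans: "t' \<in> subs t \<Longrightarrow> t'' \<in> subs t' \<Longrightarrow> t'' \<in> subs t"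
  by (induction t) auto

lemma subs_distinct: "t' \<in> subs t \<Longrightarrow> distinct (leaves t) \<Longrightarrow> distinct (leaves t')"
  by (induction t) auto

lemma lv_ne: "lv t \<noteq> {}"
  by (induction t) auto

lemma leaf_subs: "x \<in> lv t \<Longrightarrow> Leaf x \<in> subs t"
  by (induction t) auto

lemma node_disj: "Node a b \<in> subs t \<Longrightarrow> distinct (leaves t) \<Longrightarrow> lv a \<inter> lv b = {}"
  using subs_distinct[of "Node a b" t] by auto

lemma laminar:
  "distinct (leaves t) \<Longrightarrow> t1 \<in> subs t \<Longrightarrow> t2 \<in> subs t \<Longrightarrow> lv t1 \<inter> lv t2 \<noteq> {}
   \<Longrightarrow> t1 \<in> subs t2 \<or> t2 \<in> subs t1"
proof (induction t)
  case (Leaf x)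
  then show ?case by auto
next
  case (Node l r)
  have d: "lv l \<inter> lv r = {}" using Node.prems(1) by auto
  show ?case
  proof (cases "t1 = Node l r \<or> t2 = Node l r")
    case True
    then show ?thesis using Node.prems by auto
  next
    case False
    then have "t1 \<in> subs l \<union> subs r" "t2 \<in> subs l \<union> subs r" using Node.prems by auto
    moreover have "\<not> (t1 \<in> subs l \<and> t2 \<in> subs r)" "\<not> (t1 \<in> subs r \<and> t2 \<in> subs l)"
      using Node.prems(4) d subs_lv[of t1 l] subs_lv[of t2 r] subs_lv[of t1 r] subs_lv[of t2 l] by blast+
    ultimately show ?thesis using Node.IH Node.prems(1,4) by auto
  qed
qed

lemma sep_cover:
  assumes "distinct (leaves T)" "P \<in> subs T" "P = Node a b" "t \<in> subs T"
    "u \<in> lv t" "u \<in> lv a" "v \<in> lv t" "v \<in> lv b"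
  shows "lv P \<subseteq> lv t"
proof -
  have "t \<in> subs P \<or> P \<in> subs t" using laminar[OF assms(1) assms(4) assms(2)] assms by auto
  moreover have "lv a \<inter> lv b = {}" using node_disj assms by metis
  moreover {
    assume "t \<in> subs P" "t \<noteq> P"
    then have "t \<in> subs a \<or> t \<in> subs b" using assms(3) by auto
    then have False using subs_lv[of t a] subs_lv[of t b] assms(5-8) \<open>lv a \<inter> lv b = {}\<close> by auto }
  ultimately show ?thesis using subs_lv by blast
qed

lemma restrict_None: "restrict S t = None \<longleftrightarrow> lv t \<inter> S = {}"
  by (induction t) (auto split: option.splits)

lemma restrict_leaves: "restrict S t = Some t' \<Longrightarrow> leaves t' = filter (\<lambda>x. x \<in> S) (leaves t)"
proof (induction t arbitrary: t')
  case (Leaf x)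
  then show ?case by (auto split: if_splits)
next
  case (Node l r)
  then show ?case
    by (auto split: option.splits simp: restrict_None filter_empty_conv)
qed

lemma restrict_lv: "restrict S t = Some t' \<Longrightarrow> lv t' = lv t \<inter> S"
  using restrict_leaves by fastforce

lemma restrict_node:
  "restrict S t = Some t' \<Longrightarrow> Node a b \<in> subs t' \<Longrightarrow>
   \<exists>t1 t2. Node t1 t2 \<in> subs t \<and> restrict S t1 = Some a \<and> restrict S t2 = Some b"
proof (induction t arbitrary: t')
  case (Leaf x)
  then show ?case by (auto split: if_splits)
next
  case (Node l r)
  show ?case
  proof (cases "restrict S l")
    case None
    then show ?thesis using Node by (cases "restrict S r") auto
  next
    case (Some x)
    note sx = Some
    show ?thesis
    proof (cases "restrict S r")
      case None
      then show ?thesis using Node sx by auto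
    next
      case (Some y)
      then have "t' = Node x y" using Node.prems sx by auto
      then show ?thesis using Node sx Some by fastforce
    qed
  qed
qed

lemma sibling_in: "sibling x t = Some s \<Longrightarrow> x \<in> lv t"
  by (induction t) (auto split: if_splits option.splits)

lemma sibling_ex:
  "distinct (leaves t) \<Longrightarrow> x \<in> lv t \<Longrightarrow> t \<noteq> Leaf x \<Longrightarrow>
   \<exists>s. sibling x t = Some s \<and> (Node (Leaf x) s \<in> subs t \<or> Node s (Leaf x) \<in> subs t)"
proof (induction t)
  case (Leaf a)
  then show ?case by auto
next
  case (Node l r)
  show ?case
  proof (cases "l = Leaf x \<or> r = Leaf x")
    case True
    then show ?thesis by auto
  next
    case False
    show ?thesis
    proof (cases "x \<in> lv l")
      case True
      then have "l \<noteq> Leaf x" using False by auto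
      then obtain s where "sibling x l = Some s" "Node (Leaf x) s \<in> subs l \<or> Node s (Leaf x) \<in> subs l"
        using Node True by auto
      then show ?thesis using False by auto
    next
      case xr: False
      then have n: "sibling x l = None" using sibling_in by (metis option.exhaust)
      have "x \<in> lv r" "r \<noteq> Leaf x" using xr Node.prems False by auto
      then obtain s where "sibling x r = Some s" "Node (Leaf x) s \<in> subs r \<or> Node s (Leaf x) \<in> subs r"
        using Node by auto
      then show ?thesis using False n by auto
    qed
  qed
qed

lemma lca_props: "S \<noteq> {} \<Longrightarrow> S \<subseteq> lv t \<Longrightarrow> lca S t \<in> subs t \<and> S \<subseteq> lv (lca S t)"
  by (induction t) auto

lemma lca_min: "distinct (leaves t) \<Longrightarrow> S \<noteq> {} \<Longrightarrow> S \<subseteq> lv t \<Longrightarrow> t' \<in> subs t \<Longrightarrow> S \<subseteq> lv t'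
   \<Longrightarrow> lv (lca S t) \<subseteq> lv t'"
proof (induction t)
  case (Leaf x)
  then show ?case by auto
next
  case (Node l r)
  have d: "lv l \<inter> lv r = {}" using Node.prems(1) by auto
  show ?case
  proof (cases "t' = Node l r")
    case True
    then show ?thesis using lca_props[OF Node.prems(2,3)] subs_lv by blast
  next
    case False
    then have t': "t' \<in> subs l \<or> t' \<in> subs r" using Node.prems by auto
    show ?thesis
    proof (cases "S \<subseteq> lv l")
      case True
      then have "t' \<in> subs l" using t' subs_lv[of t' r] Node.prems(2,5) d by blast
      then show ?thesis using Node True by auto
    next
      case False
      note nl = False
      show ?thesis
      proof (cases "S \<subseteq> lv r")
        case True
        then have "t' \<in> subs r" using t' subs_lv[of t' l] Node.prems(2,5) d by blast
        then show ?thesis using Node True nl by auto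
      next
        case False
        then show ?thesis using nl t' subs_lv[of t' l] subs_lv[of t' r] Node.prems(5) by auto
      qed
    qed
  qed
qed

lemma lca_mono: "distinct (leaves t) \<Longrightarrow> S \<noteq> {} \<Longrightarrow> S \<subseteq> S' \<Longrightarrow> S' \<subseteq> lv t
  \<Longrightarrow> lv (lca S t) \<subseteq> lv (lca S' t)"
  using lca_min[of t S "lca S' t"] lca_props[of S' t] by auto

lemma lca_single: "distinct (leaves t) \<Longrightarrow> x \<in> lv t \<Longrightarrow> lv (lca {x} t) = {x}"
  using lca_min[of t "{x}" "Leaf x"] leaf_subs lca_props[of "{x}" t] by fastforce




lemma Mset_sub: "Mset L \<rho> \<sigma> Ts i \<subseteq> {1..i}"
  by (induction i) (auto simp: Let_def)

lemma Mset_mono_eq: "i \<le> i' \<Longrightarrow> Mset L \<rho> \<sigma> Ts i' \<inter> {..i} = Mset L \<rho> \<sigma> Ts i"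
proof (induction i' rule: dec_induct)
  case base
  then show ?case using Mset_sub[of L \<rho> \<sigma> Ts i] by auto
next
  case (step m)
  then show ?case by (auto simp: Let_def)
qed

lemma mem_Mset: "1 \<le> j \<Longrightarrow> j \<le> N \<Longrightarrow>
  (j \<in> Mset L \<rho> \<sigma> Ts N \<longleftrightarrow> mis_cond L \<rho> \<sigma> Ts (Mset L \<rho> \<sigma> Ts (j-1)) j)"
proof -
  assume j: "1 \<le> j" "j \<le> N"
  have "j \<in> Mset L \<rho> \<sigma> Ts N \<longleftrightarrow> j \<in> Mset L \<rho> \<sigma> Ts j"
    using Mset_mono_eq[OF j(2), of L \<rho> \<sigma> Ts] by auto
  moreover obtain p where p: "j = Suc p" using j by (cases j) auto
  moreover have "j \<notin> Mset L \<rho> \<sigma> Ts p" using Mset_sub[of L \<rho> \<sigma> Ts p] p by auto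
  ultimately show ?thesis by (auto simp: Let_def)
qed

lemma vidx_node:
  assumes "distinct (leaves (Node d1 d2))" "inj_on \<sigma> (lv (Node d1 d2))"
  shows "\<exists>x. vidx \<sigma> (Node d1 d2) = - int (\<sigma> x) \<and> \<sigma> x \<ge> 1 \<and>
     ((x \<in> lv d1 \<and> (\<forall>y\<in>lv d1. \<sigma> x \<le> \<sigma> y) \<and> (\<exists>w\<in>lv d2. \<sigma> w < \<sigma> x)) \<or>
      (x \<in> lv d2 \<and> (\<forall>y\<in>lv d2. \<sigma> x \<le> \<sigma> y) \<and> (\<exists>w\<in>lv d1. \<sigma> w < \<sigma> x)))"
proof -
  have f: "finite (\<sigma> ` lv d)" "\<sigma> ` lv d \<noteq> {}" for d :: "'a btree" using lv_ne by auto
  obtain x1 where x1: "x1 \<in> lv d1" "\<sigma> x1 = mu \<sigma> d1"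
    using Min_in[OF f] unfolding mu_def by (metis imageE)
  obtain x2 where x2: "x2 \<in> lv d2" "\<sigma> x2 = mu \<sigma> d2"
    using Min_in[OF f] unfolding mu_def by (metis imageE)
  have m1: "\<forall>y\<in>lv d1. \<sigma> x1 \<le> \<sigma> y" using x1 f unfolding mu_def by auto
  have m2: "\<forall>y\<in>lv d2. \<sigma> x2 \<le> \<sigma> y" using x2 f unfolding mu_def by auto
  have "x1 \<noteq> x2" using assms(1) x1 x2 by auto
  then have ne: "\<sigma> x1 \<noteq> \<sigma> x2" using assms(2) x1(1) x2(1) by (simp add: inj_on_eq_iff)
  show ?thesis
  proof (cases "\<sigma> x1 > \<sigma> x2")
    case True
    have "vidx \<sigma> (Node d1 d2) = - int (\<sigma> x1)" using True x1 x2 by (simp add: max_def)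
    moreover have "x1 \<in> lv d1 \<and> (\<forall>y\<in>lv d1. \<sigma> x1 \<le> \<sigma> y) \<and> (\<exists>w\<in>lv d2. \<sigma> w < \<sigma> x1)"
      using x1 x2 m1 True by blast
    moreover have "\<sigma> x1 \<ge> 1" using True by linarith
    ultimately show ?thesis by blast
  next
    case False
    have "vidx \<sigma> (Node d1 d2) = - int (\<sigma> x2)" using False x1 x2 by (simp add: max_def)
    moreover have "x2 \<in> lv d2 \<and> (\<forall>y\<in>lv d2. \<sigma> x2 \<le> \<sigma> y) \<and> (\<exists>w\<in>lv d1. \<sigma> w < \<sigma> x2)"
      using x1 x2 m2 False ne by (metis linorder_neqE_nat)
    moreover have "\<sigma> x2 \<ge> 1" using False ne by linarith
    ultimately show ?thesis by blast
  qed
qed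

lemma span_iff: "c \<in> span L \<rho> \<sigma> Ts S a \<longleftrightarrow> c = int (mi L \<rho> \<sigma> Ts a) \<or>
   (\<exists>x\<in>S - {lab L \<rho> \<sigma> (mi L \<rho> \<sigma> Ts a), \<rho>}. c = int (\<sigma> x) \<or> c = - int (\<sigma> x))"
  unfolding span_def by auto




locale setting =
  fixes L :: "'a set" and \<rho> :: 'a and \<sigma> :: "'a \<Rightarrow> nat" and Ts :: "'a btree set" and T :: "'a btree"
  assumes finL: "finite L" and rhoL: "\<rho> \<in> L" and finTs: "finite Ts" and card2: "card Ts \<ge> 2"
    and trees: "\<forall>T'\<in>Ts. is_tree_over L \<rho> T'"
    and bij: "bij_betw \<sigma> (L - {\<rho>}) {0..<nleaves L \<rho>}"
    and TinTs: "T \<in> Ts"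
begin

abbreviation "nn \<equiv> nleaves L \<rho>"
abbreviation "MM \<equiv> mismatched L \<rho> \<sigma> Ts"
abbreviation "KK \<equiv> card MM"
abbreviation "mm a \<equiv> mi L \<rho> \<sigma> Ts a"
abbreviation "ll k \<equiv> lab L \<rho> \<sigma> k"
abbreviation "AA j \<equiv> ll ` {0..j}"

lemma distT: "distinct (leaves T)" and lvT: "lv T = L - {\<rho>}"
  using trees TinTs unfolding is_tree_over_def by auto

lemma injs: "inj_on \<sigma> (L - {\<rho>})" using bij bij_betw_imp_inj_on by blast

lemma ll_sig: "y \<in> L - {\<rho>} \<Longrightarrow> ll (\<sigma> y) = y"
  unfolding lab_def using injs by (simp add: inv_into_f_f)

lemma sig_ll: "k < nn \<Longrightarrow> \<sigma> (ll k) = k"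
  unfolding lab_def using bij bij_betw_inv_into_right by fastforce

lemma ll_in: "k < nn \<Longrightarrow> ll k \<in> L - {\<rho>}"
  unfolding lab_def using bij by (metis atLeastLessThan_iff bij_betw_def inv_into_into zero_le)

lemma sig_lt: "y \<in> L - {\<rho>} \<Longrightarrow> \<sigma> y < nn"
  using bij bij_betw_apply by fastforce

lemma sig_eq: "x \<in> L - {\<rho>} \<Longrightarrow> y \<in> L - {\<rho>} \<Longrightarrow> \<sigma> x = \<sigma> y \<Longrightarrow> x = y"
  using injs by (simp add: inj_on_eq_iff)

lemma ll_inj: "a < nn \<Longrightarrow> b < nn \<Longrightarrow> ll a = ll b \<Longrightarrow> a = b"
  using sig_ll by metis

lemma inA: "j < nn \<Longrightarrow> y \<in> L - {\<rho>} \<Longrightarrow> y \<in> AA j \<longleftrightarrow> \<sigma> y \<le> j"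
proof
  assume "j < nn" "y \<in> L - {\<rho>}" "y \<in> AA j"
  then obtain k where "k \<le> j" "y = ll k" by auto
  then show "\<sigma> y \<le> j" using sig_ll \<open>j < nn\<close> by auto
next
  assume "j < nn" "y \<in> L - {\<rho>}" "\<sigma> y \<le> j"
  then show "y \<in> AA j" using ll_sig by (metis atLeastAtMost_iff image_eqI zero_le)
qed

lemma AA_sub: "j < nn \<Longrightarrow> AA j \<subseteq> L - {\<rho>}"
  using ll_in by auto

lemma nn_pos: "nn \<ge> 1"
proof -
  obtain x where "x \<in> lv T" using lv_ne[of T] by (meson ex_in_conv)
  then show ?thesis using sig_lt lvT by fastforce
qed

lemma M_eq: "MM = Mset L \<rho> \<sigma> Ts (nn - 1)" by (simp add: mismatched_def)

lemma M_sub: "MM \<subseteq> {1..nn - 1}" using M_eq Mset_sub by metis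

lemma finM: "finite MM" using M_sub finite_subset by blast

lemma memM: "1 \<le> j \<Longrightarrow> j < nn \<Longrightarrow> j \<in> MM \<longleftrightarrow> mis_cond L \<rho> \<sigma> Ts (Mset L \<rho> \<sigma> Ts (j-1)) j"
proof -
  assume j: "1 \<le> j" "j < nn"
  then have "j \<le> nn - 1" by simp
  then show ?thesis using mem_Mset[OF j(1), of "nn - 1" L \<rho> \<sigma> Ts] M_eq by simp
qed

lemma Mset_prev: "j < nn \<Longrightarrow> Mset L \<rho> \<sigma> Ts (j-1) = MM \<inter> {..j-1}"
  using M_eq Mset_mono_eq[of "j-1" "nn-1" L \<rho> \<sigma> Ts] by auto

lemma sl: "length (sorted_list_of_set MM) = KK" "distinct (sorted_list_of_set MM)"
   "set (sorted_list_of_set MM) = MM"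
  using finM by auto

lemma mm_in: "1 \<le> a \<Longrightarrow> a \<le> KK \<Longrightarrow> mm a \<in> MM"
proof -
  assume a: "1 \<le> a" "a \<le> KK"
  then have "a - 1 < length (sorted_list_of_set MM)" using sl by auto
  then have "sorted_list_of_set MM ! (a-1) \<in> MM" using sl nth_mem by metis
  then show ?thesis using a by (simp add: mi_def)
qed

lemma mm_lt: "a \<le> KK \<Longrightarrow> mm a < nn"
proof (cases "a = 0")
  case True
  then show ?thesis using nn_pos by (simp add: mi_def)
next
  case False
  assume "a \<le> KK"
  then show ?thesis using mm_in[of a] M_sub False nn_pos by fastforce
qed

lemma mm_pos: "1 \<le> a \<Longrightarrow> a \<le> KK \<Longrightarrow> mm a \<ge> 1"
  using mm_in M_sub by fastforce

lemma mm0: "mm 0 = 0" by (simp add: mi_def)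

lemma mm_inj: "a \<le> KK \<Longrightarrow> b \<le> KK \<Longrightarrow> mm a = mm b \<Longrightarrow> a = b"
proof -
  assume ab: "a \<le> KK" "b \<le> KK" "mm a = mm b"
  show "a = b"
  proof (cases "a = 0 \<or> b = 0")
    case True
    then show ?thesis using ab mm_pos mm0 by (metis le_zero_eq not_one_le_zero less_one not_le)
  next
    case False
    then have "sorted_list_of_set MM ! (a-1) = sorted_list_of_set MM ! (b-1)" using ab by (simp add: mi_def)
    then have "a - 1 = b - 1" using sl ab False nth_eq_iff_index_eq[of "sorted_list_of_set MM" "a-1" "b-1"]
      by auto
    then show ?thesis using False by auto
  qed
qed

lemma mm_surj: "j \<in> MM \<Longrightarrow> \<exists>a. 1 \<le> a \<and> a \<le> KK \<and> mm a = j"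
proof -
  assume "j \<in> MM"
  then obtain p where "p < KK" "sorted_list_of_set MM ! p = j" using sl in_set_conv_nth by metis
  then show ?thesis by (intro exI[of _ "Suc p"]) (auto simp: mi_def)
qed

lemma sib_struct:
  assumes j: "1 \<le> j" "j < nn"
  obtains s t1 t2 where "ola L \<rho> \<sigma> T j = vidx \<sigma> s" "Node t1 t2 \<in> subs T \<or> Node t2 t1 \<in> subs T"
    "lv t1 \<inter> AA j = {ll j}" "lv s = lv t2 \<inter> AA j" "distinct (leaves s)"
    "\<And>d1 d2. s = Node d1 d2 \<Longrightarrow> \<exists>D1 D2. Node D1 D2 \<in> subs T \<and> lv d1 = lv D1 \<inter> AA j \<and> lv d2 = lv D2 \<inter> AA j"
proof -
  have sub: "AA j \<subseteq> lv T" using AA_sub[OF j(2)] lvT by auto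
  have l0: "ll 0 \<in> AA j" and lj: "ll j \<in> AA j" by auto
  then have "restrict (AA j) T \<noteq> None" using restrict_None[of "AA j" T] sub by blast
  then obtain Tj where Tj: "restrict (AA j) T = Some Tj" by blast
  have dTj: "distinct (leaves Tj)" using restrict_leaves[OF Tj] distT by simp
  have lTj: "lv Tj = AA j" using restrict_lv[OF Tj] sub by auto
  have "ll 0 \<noteq> ll j" using ll_inj[of 0 j] j by auto
  then have "Tj \<noteq> Leaf (ll j)" using lTj l0 by auto
  then obtain s where s: "sibling (ll j) Tj = Some s" "Node (Leaf (ll j)) s \<in> subs Tj \<or> Node s (Leaf (ll j)) \<in> subs Tj"
    using sibling_ex[OF dTj] lTj lj by blast
  have ola: "ola L \<rho> \<sigma> T j = vidx \<sigma> s" unfolding ola_def using Tj s by simp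
  have ssub: "s \<in> subs Tj" using s(2) subs_trans[of _ Tj s] by fastforce
  have ds: "distinct (leaves s)" using subs_distinct[OF ssub dTj] .
  have dd: "\<exists>D1 D2. Node D1 D2 \<in> subs T \<and> lv d1 = lv D1 \<inter> AA j \<and> lv d2 = lv D2 \<inter> AA j"
    if sn: "s = Node d1 d2" for d1 d2
  proof -
    obtain D1 D2 where D: "Node D1 D2 \<in> subs T" "restrict (AA j) D1 = Some d1" "restrict (AA j) D2 = Some d2"
      using restrict_node[OF Tj] ssub sn by blast
    show ?thesis using D(1) restrict_lv[OF D(2)] restrict_lv[OF D(3)] by blast
  qed
  from s(2) show ?thesis
  proof
    assume "Node (Leaf (ll j)) s \<in> subs Tj"
    then obtain t1 t2 where "Node t1 t2 \<in> subs T" "restrict (AA j) t1 = Some (Leaf (ll j))"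
       "restrict (AA j) t2 = Some s" using restrict_node[OF Tj, of "Leaf (ll j)" s] restrict_node[OF Tj, of s "Leaf (ll j)"] by blast
    moreover have "lv t1 \<inter> AA j = {ll j}" using restrict_lv[OF \<open>restrict (AA j) t1 = Some (Leaf (ll j))\<close>] by simp
    moreover have "lv s = lv t2 \<inter> AA j" using restrict_lv[OF \<open>restrict (AA j) t2 = Some s\<close>] by simp
    ultimately show ?thesis
      apply -
      apply (rule that[of s t1 t2])
      apply (rule ola)
      apply simp
      apply simp
      apply simp
      apply (rule ds)
      apply (rule dd)
      apply assumption
      done
  next
    assume "Node s (Leaf (ll j)) \<in> subs Tj"
    then obtain t1 t2 where "Node t2 t1 \<in> subs T" "restrict (AA j) t1 = Some (Leaf (ll j))"
       "restrict (AA j) t2 = Some s" using restrict_node[OF Tj, of "Leaf (ll j)" s] restrict_node[OF Tj, of s "Leaf (ll j)"] by blast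
    moreover have "lv t1 \<inter> AA j = {ll j}" using restrict_lv[OF \<open>restrict (AA j) t1 = Some (Leaf (ll j))\<close>] by simp
    moreover have "lv s = lv t2 \<inter> AA j" using restrict_lv[OF \<open>restrict (AA j) t2 = Some s\<close>] by simp
    ultimately show ?thesis
      apply -
      apply (rule that[of s t1 t2])
      apply (rule ola)
      apply simp
      apply simp
      apply simp
      apply (rule ds)
      apply (rule dd)
      apply assumption
      done
  qed
qed

end



context setting begin

definition gA where "gA Ls \<longleftrightarrow> (\<forall>a\<le>KK. Ls a \<subseteq> L \<and> (a \<noteq> 0 \<longrightarrow> \<rho> \<notin> Ls a) \<and> ll (mm a) \<in> Ls a)"
definition gB where "gB Ls \<longleftrightarrow> (\<forall>a\<le>KK. \<forall>b\<le>KK. a \<noteq> b \<longrightarrow> Ls a \<inter> Ls b \<subseteq> {\<rho>})"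
definition gC where "gC j Ls \<longleftrightarrow> (\<forall>y\<in>L-{\<rho>}. \<sigma> y < j \<longrightarrow> (\<exists>a\<le>KK. y \<in> Ls a))"
definition gD where "gD j Ls \<longleftrightarrow> (\<forall>a\<le>KK. \<forall>y\<in>Ls a - {\<rho>}. \<sigma> y < j \<or> y = ll (mm a))"
definition loc where "loc a S \<longleftrightarrow> (\<forall>y\<in>lv (lca S T). mm a \<le> \<sigma> y) \<and>
   (\<forall>x\<in>S - {ll (mm a)}. \<exists>t1 t2. (Node t1 t2 \<in> subs T \<or> Node t2 t1 \<in> subs T) \<and>
      lv t1 \<inter> AA (\<sigma> x) = {x} \<and> lv t2 \<inter> AA (\<sigma> x) \<noteq> {} \<and> lv t1 \<union> lv t2 \<subseteq> lv (lca S T))"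
definition gE where "gE Ls \<longleftrightarrow> (\<forall>a. 1 \<le> a \<and> a \<le> KK \<longrightarrow> loc a (Ls a))"
definition ginv where "ginv j Ls \<longleftrightarrow> gA Ls \<and> gB Ls \<and> gC j Ls \<and> gD j Ls \<and> gE Ls"

lemma neg_contain:
  assumes PD: "Node D1 D2 \<in> subs T \<or> Node D2 D1 \<in> subs T"
    and xD1: "x \<in> lv D1" and minx: "\<forall>y\<in>lv D1 \<inter> AA j. \<sigma> x \<le> \<sigma> y"
    and NP: "Node t1 t2 \<in> subs T \<or> Node t2 t1 \<in> subs T"
    and xt1: "x \<in> lv t1" and u: "u \<in> lv t2" "u \<in> AA (\<sigma> x)"
    and j: "\<sigma> x \<le> j" "j < nn"
  shows "lv D1 \<union> lv D2 \<subseteq> lv t1 \<union> lv t2"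
proof -
  obtain ND where ND: "ND \<in> subs T" "ND = Node D1 D2 \<or> ND = Node D2 D1" using PD by blast
  obtain NP' where NP': "NP' \<in> subs T" "NP' = Node t1 t2 \<or> NP' = Node t2 t1" using NP by blast
  have lND: "lv ND = lv D1 \<union> lv D2" using ND(2) by auto
  have lNP: "lv NP' = lv t1 \<union> lv t2" using NP'(2) by auto
  have dD: "lv D1 \<inter> lv D2 = {}" using ND node_disj[OF _ distT] by blast
  have dt: "lv t1 \<inter> lv t2 = {}" using NP' node_disj[OF _ distT] by blast
  have xND: "x \<in> lv ND" and xNP: "x \<in> lv NP'" using xD1 xt1 lND lNP by auto
  then have "ND \<in> subs NP' \<or> NP' \<in> subs ND" using laminar[OF distT ND(1) NP'(1)] by blast
  then show ?thesis
  proof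
    assume "ND \<in> subs NP'" then show ?thesis using subs_lv lND lNP by blast
  next
    assume h: "NP' \<in> subs ND"
    show ?thesis
    proof (cases "NP' = ND")
      case True then show ?thesis using lND lNP by auto
    next
      case False
      then have "NP' \<in> subs D1 \<or> NP' \<in> subs D2" using h ND(2) by auto
      then show ?thesis
      proof
        assume "NP' \<in> subs D2"
        then have "x \<in> lv D2" using subs_lv xNP by blast
        then show ?thesis using xD1 dD by blast
      next
        assume "NP' \<in> subs D1"
        then have uD1: "u \<in> lv D1" using subs_lv lNP u(1) by blast
        have "lv NP' \<subseteq> L - {\<rho>}" using NP'(1) subs_lv lvT by blast
        then have xL: "x \<in> L - {\<rho>}" and uL: "u \<in> L - {\<rho>}" using xNP u(1) lNP by auto
        have "u \<noteq> x" using dt xt1 u(1) by blast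
        have sxn: "\<sigma> x < nn" using j by simp
        have "\<sigma> u \<le> \<sigma> x" using inA[OF sxn uL] u(2) by simp
        moreover have "\<sigma> u \<noteq> \<sigma> x" using sig_eq xL uL \<open>u \<noteq> x\<close> by blast
        ultimately have "\<sigma> u < \<sigma> x" by simp
        moreover have "u \<in> AA j" using inA[OF j(2) uL] \<open>\<sigma> u < \<sigma> x\<close> j(1) by simp
        ultimately have False using minx uD1 by force
        then show ?thesis by simp
      qed
    qed
  qed
qed

lemma extend:
  assumes S: "S \<noteq> {}" "S \<subseteq> L - {\<rho>}"
    and b: "\<forall>y\<in>lv (lca S T). m0 \<le> \<sigma> y"
    and NP: "Node t1 t2 \<in> subs T \<or> Node t2 t1 \<in> subs T"
    and t1: "lv t1 \<inter> AA j = {ll j}"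
    and z: "z \<in> S" "z \<in> lv t2" "z \<in> AA j"
    and t2: "lv t2 \<inter> AA j \<subseteq> lv (lca S T)"
    and j: "j < nn"
  shows "(\<forall>y\<in>lv (lca (insert (ll j) S) T). m0 \<le> \<sigma> y) \<and> lv t1 \<union> lv t2 \<subseteq> lv (lca (insert (ll j) S) T)"
proof -
  define R where "R = lca S T"
  define R' where "R' = lca (insert (ll j) S) T"
  have ljL: "ll j \<in> L - {\<rho>}" using ll_in j .
  have S'sub: "insert (ll j) S \<subseteq> lv T" using S ljL lvT by auto
  have Ssub: "S \<subseteq> lv T" using S lvT by auto
  have R: "R \<in> subs T" "S \<subseteq> lv R" using lca_props[OF S(1) Ssub] R_def by auto
  have R': "R' \<in> subs T" "insert (ll j) S \<subseteq> lv R'" using lca_props[OF _ S'sub] R'_def by auto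
  obtain NP' where NP': "NP' \<in> subs T" "NP' = Node t1 t2 \<or> NP' = Node t2 t1" using NP by blast
  have lNP: "lv NP' = lv t1 \<union> lv t2" using NP'(2) by auto
  have dt: "lv t1 \<inter> lv t2 = {}" using NP' node_disj[OF _ distT] by blast
  have ljt1: "ll j \<in> lv t1" using t1 by auto
  have cover: "lv t1 \<union> lv t2 \<subseteq> lv R'"
  proof (cases "NP' = Node t1 t2")
    case True
    then show ?thesis using sep_cover[OF distT NP'(1) True R'(1), of "ll j" z] R'(2) ljt1 z lNP by auto
  next
    case False
    then have e: "NP' = Node t2 t1" using NP' by auto
    show ?thesis using sep_cover[OF distT NP'(1) e R'(1), of z "ll j"] R'(2) ljt1 z lNP by auto
  qed
  have zL: "z \<in> L-{\<rho>}" using z S by auto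
  have "\<sigma> z \<le> j" using inA[OF j zL] z(3) by simp
  moreover have "z \<noteq> ll j" using dt ljt1 z(2) by auto
  then have "\<sigma> z \<noteq> j" using ll_sig[OF zL] by metis
  ultimately have "\<sigma> z < j" by simp
  have "m0 \<le> \<sigma> z" using b R(2) z(1) R_def by auto
  then have m0j: "m0 < j" using \<open>\<sigma> z < j\<close> by simp
  have "z \<in> lv R" "z \<in> lv NP'" using R z lNP by auto
  then have "NP' \<in> subs R \<or> R \<in> subs NP'" using laminar[OF distT NP'(1) R(1)] by blast
  then have bb: "\<forall>y\<in>lv R'. m0 \<le> \<sigma> y"
  proof
    assume "NP' \<in> subs R"
    then have "ll j \<in> lv R" using subs_lv lNP ljt1 by blast
    then have "lv R' \<subseteq> lv R" using lca_min[OF distT _ S'sub R(1)] R(2) R'_def by auto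
    then show ?thesis using b R_def by auto
  next
    assume "R \<in> subs NP'"
    then have "insert (ll j) S \<subseteq> lv NP'" using subs_lv R(2) lNP ljt1 by blast
    then have sub: "lv R' \<subseteq> lv NP'" using lca_min[OF distT _ S'sub NP'(1)] R'_def by auto
    show ?thesis
    proof
      fix y assume "y \<in> lv R'"
      then have y: "y \<in> lv NP'" using sub by auto
      then have yL: "y \<in> L - {\<rho>}" using NP'(1) subs_lv lvT by blast
      show "m0 \<le> \<sigma> y"
      proof (cases "\<sigma> y \<le> j")
        case False then show ?thesis using m0j by simp
      next
        case True
        then have yA: "y \<in> AA j" using inA[OF j yL] by simp
        show ?thesis
        proof (cases "y \<in> lv t1")
          case True then have "y = ll j" using t1 yA by auto
          then show ?thesis using sig_ll[OF j] m0j by simp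
        next
          case False then have "y \<in> lv t2" using y lNP by auto
          then have "y \<in> lv R" using t2 yA R_def by auto
          then show ?thesis using b R_def by auto
        qed
      qed
    qed
  qed
  show ?thesis using bb cover R'_def by simp
qed

end



context setting begin

lemma loc_step:
  assumes j: "1 \<le> j" "j < nn" and a: "1 \<le> a" "a \<le> KK"
    and S: "S \<subseteq> L - {\<rho>}" "ll (mm a) \<in> S" and lc: "loc a S"
    and c: "ola L \<rho> \<sigma> T j \<in> span L \<rho> \<sigma> Ts S a"
  shows "loc a (insert (ll j) S)"
proof -
  obtain s t1 t2 where st: "ola L \<rho> \<sigma> T j = vidx \<sigma> s" "Node t1 t2 \<in> subs T \<or> Node t2 t1 \<in> subs T"
    "lv t1 \<inter> AA j = {ll j}" "lv s = lv t2 \<inter> AA j" "distinct (leaves s)"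
    "\<And>d1 d2. s = Node d1 d2 \<Longrightarrow> \<exists>D1 D2. Node D1 D2 \<in> subs T \<and> lv d1 = lv D1 \<inter> AA j \<and> lv d2 = lv D2 \<inter> AA j"
    using sib_struct[OF j] by blast
  have Sne: "S \<noteq> {}" using S by auto
  have Ssub: "S \<subseteq> lv T" using S lvT by auto
  have SR: "S \<subseteq> lv (lca S T)" using lca_props[OF Sne Ssub] by auto
  have sL: "lv s \<subseteq> L - {\<rho>}" using st(4) AA_sub[OF j(2)] by auto
  have injs_s: "inj_on \<sigma> (lv s)" using injs sL inj_on_subset by blast
  have mmL: "ll (mm a) \<in> L - {\<rho>}" and smm: "\<sigma> (ll (mm a)) = mm a" using ll_in sig_ll mm_lt a by auto
  have key: "\<exists>z. z \<in> S \<and> z \<in> lv s \<and> lv s \<subseteq> lv (lca S T)"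
  proof (cases s)
    case (Leaf y)
    have yL: "y \<in> L - {\<rho>}" using sL Leaf by auto
    have cy: "ola L \<rho> \<sigma> T j = int (\<sigma> y)" using st(1) Leaf by simp
    from c[unfolded span_iff] have "y \<in> S"
    proof
      assume "ola L \<rho> \<sigma> T j = int (mm a)"
      then have "\<sigma> y = \<sigma> (ll (mm a))" using cy smm by simp
      then have "y = ll (mm a)" using sig_eq yL mmL by blast
      then show ?thesis using S by simp
    next
      assume "\<exists>x\<in>S - {ll (mm a), \<rho>}. ola L \<rho> \<sigma> T j = int (\<sigma> x) \<or> ola L \<rho> \<sigma> T j = - int (\<sigma> x)"
      then obtain x where x: "x \<in> S" "ola L \<rho> \<sigma> T j = int (\<sigma> x) \<or> ola L \<rho> \<sigma> T j = - int (\<sigma> x)" by blast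
      then have "\<sigma> y = \<sigma> x" using cy by auto
      then have "y = x" using sig_eq yL x(1) S by blast
      then show ?thesis using x by simp
    qed
    then show ?thesis using Leaf SR by (intro exI[of _ y]) auto
  next
    case (Node d1 d2)
    obtain x where x: "vidx \<sigma> (Node d1 d2) = - int (\<sigma> x)" "\<sigma> x \<ge> 1"
      "(x \<in> lv d1 \<and> (\<forall>y\<in>lv d1. \<sigma> x \<le> \<sigma> y) \<and> (\<exists>w\<in>lv d2. \<sigma> w < \<sigma> x)) \<or>
       (x \<in> lv d2 \<and> (\<forall>y\<in>lv d2. \<sigma> x \<le> \<sigma> y) \<and> (\<exists>w\<in>lv d1. \<sigma> w < \<sigma> x))"
      using vidx_node[of d1 d2 \<sigma>] st(5) injs_s Node by blast
    have cx: "ola L \<rho> \<sigma> T j = - int (\<sigma> x)" using st(1) x(1) Node by simp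
    have xs: "x \<in> lv s" using x(3) Node by auto
    have xL: "x \<in> L - {\<rho>}" using xs sL by auto
    from c[unfolded span_iff] have xS: "x \<in> S - {ll (mm a)}"
    proof
      assume "ola L \<rho> \<sigma> T j = int (mm a)"
      then show ?thesis using cx x(2) by simp
    next
      assume "\<exists>x\<in>S - {ll (mm a), \<rho>}. ola L \<rho> \<sigma> T j = int (\<sigma> x) \<or> ola L \<rho> \<sigma> T j = - int (\<sigma> x)"
      then obtain x' where x': "x' \<in> S - {ll (mm a), \<rho>}" "ola L \<rho> \<sigma> T j = int (\<sigma> x') \<or> ola L \<rho> \<sigma> T j = - int (\<sigma> x')" by blast
      then have "\<sigma> x = \<sigma> x'" using cx x(2) by auto
      then have "x = x'" using sig_eq xL x'(1) S by blast
      then show ?thesis using x' by simp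
    qed
    obtain t1' t2' where w: "Node t1' t2' \<in> subs T \<or> Node t2' t1' \<in> subs T" "lv t1' \<inter> AA (\<sigma> x) = {x}"
      "lv t2' \<inter> AA (\<sigma> x) \<noteq> {}" "lv t1' \<union> lv t2' \<subseteq> lv (lca S T)" using lc xS unfolding loc_def by blast
    obtain u where u: "u \<in> lv t2'" "u \<in> AA (\<sigma> x)" using w(3) by blast
    have xt1: "x \<in> lv t1'" using w(2) by blast
    obtain D1 D2 where D: "Node D1 D2 \<in> subs T" "lv d1 = lv D1 \<inter> AA j" "lv d2 = lv D2 \<inter> AA j"
      using st(6) Node by blast
    have sxj: "\<sigma> x \<le> j" using inA[OF j(2) xL] xs st(4) by auto
    from x(3) have "lv D1 \<union> lv D2 \<subseteq> lv t1' \<union> lv t2'"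
    proof
      assume h: "x \<in> lv d1 \<and> (\<forall>y\<in>lv d1. \<sigma> x \<le> \<sigma> y) \<and> (\<exists>w\<in>lv d2. \<sigma> w < \<sigma> x)"
      show ?thesis using neg_contain[of D1 D2 x j t1' t2' u] D h w(1) xt1 u sxj j(2) by auto
    next
      assume h: "x \<in> lv d2 \<and> (\<forall>y\<in>lv d2. \<sigma> x \<le> \<sigma> y) \<and> (\<exists>w\<in>lv d1. \<sigma> w < \<sigma> x)"
      show ?thesis using neg_contain[of D2 D1 x j t1' t2' u] D h w(1) xt1 u sxj j(2) by auto
    qed
    then have "lv s \<subseteq> lv (lca S T)" using Node D w(4) by auto
    then show ?thesis using xS xs by blast
  qed
  then obtain z where z: "z \<in> S" "z \<in> lv s" "lv s \<subseteq> lv (lca S T)" by blast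
  have zA: "z \<in> lv t2" "z \<in> AA j" using z(2) st(4) by auto
  have E: "(\<forall>y\<in>lv (lca (insert (ll j) S) T). mm a \<le> \<sigma> y) \<and> lv t1 \<union> lv t2 \<subseteq> lv (lca (insert (ll j) S) T)"
    using extend[OF Sne S(1) _ st(2) st(3) z(1) zA _ j(2), of "mm a"] lc z(3) st(4) unfolding loc_def by auto
  have mono: "lv (lca S T) \<subseteq> lv (lca (insert (ll j) S) T)"
    using lca_mono[OF distT Sne, of "insert (ll j) S"] Ssub ll_in[OF j(2)] lvT by auto
  have ljL: "ll j \<in> L-{\<rho>}" "\<sigma> (ll j) = j" using ll_in sig_ll j by auto
  show ?thesis
    unfolding loc_def
  proof (intro conjI ballI)
    show "\<And>y. y \<in> lv (lca (insert (ll j) S) T) \<Longrightarrow> mm a \<le> \<sigma> y" using E by auto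
  next
    fix x assume x: "x \<in> insert (ll j) S - {ll (mm a)}"
    show "\<exists>t1 t2. (Node t1 t2 \<in> subs T \<or> Node t2 t1 \<in> subs T) \<and>
      lv t1 \<inter> AA (\<sigma> x) = {x} \<and> lv t2 \<inter> AA (\<sigma> x) \<noteq> {} \<and> lv t1 \<union> lv t2 \<subseteq> lv (lca (insert (ll j) S) T)"
    proof (cases "x = ll j")
      case True
      have "lv t2 \<inter> AA j \<noteq> {}" using zA by blast
      then show ?thesis using True st(2,3) E ljL by (intro exI[of _ t1] exI[of _ t2]) auto
    next
      case False
      then have "x \<in> S - {ll (mm a)}" using x by auto
      then obtain t1' t2' where "(Node t1' t2' \<in> subs T \<or> Node t2' t1' \<in> subs T) \<and>
        lv t1' \<inter> AA (\<sigma> x) = {x} \<and> lv t2' \<inter> AA (\<sigma> x) \<noteq> {} \<and> lv t1' \<union> lv t2' \<subseteq> lv (lca S T)"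
        using lc unfolding loc_def by blast
      then show ?thesis using mono by blast
    qed
  qed
qed

end



context setting begin

lemma init_inv: "ginv 1 (init_sets L \<rho> \<sigma> Ts)"
proof -
  define I where "I = init_sets L \<rho> \<sigma> Ts"
  have I0: "I 0 = {\<rho>, ll 0}" and Ia: "\<And>a. a \<noteq> 0 \<Longrightarrow> I a = {ll (mm a)}"
    unfolding I_def init_sets_def by auto
  have llm: "\<And>a. a \<le> KK \<Longrightarrow> ll (mm a) \<in> L - {\<rho>} \<and> \<sigma> (ll (mm a)) = mm a"
    using ll_in sig_ll mm_lt by blast
  have llmL: "\<And>a. a \<le> KK \<Longrightarrow> ll (mm a) \<in> L - {\<rho>}" using llm by blast
  have Ir: "\<And>a. a \<le> KK \<Longrightarrow> I a - {\<rho>} = {ll (mm a)}"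
  proof -
    fix a assume a: "a \<le> KK"
    show "I a - {\<rho>} = {ll (mm a)}"
    proof (cases "a = 0")
      case True
      have "ll 0 \<in> L - {\<rho>}" using ll_in[of 0] nn_pos by simp
      then show ?thesis using I0 True mm0 by auto
    next
      case False
      have "ll (mm a) \<in> L - {\<rho>}" using ll_in[OF mm_lt[OF a]] .
      then show ?thesis using Ia[OF False] by auto
    qed
  qed
  have gA: "gA I" unfolding gA_def
  proof (intro allI impI)
    fix a assume a: "a \<le> KK"
    have "I a \<subseteq> insert \<rho> (I a - {\<rho>})" by blast
    also have "\<dots> = {\<rho>, ll (mm a)}" using Ir[OF a] by simp
    also have "\<dots> \<subseteq> L" using rhoL llmL[OF a] by blast
    finally have 1: "I a \<subseteq> L" .
    have 2: "a \<noteq> 0 \<longrightarrow> \<rho> \<notin> I a"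
    proof
      assume "a \<noteq> 0"
      then have "I a = {ll (mm a)}" using Ia by blast
      moreover have "ll (mm a) \<noteq> \<rho>" using llmL[OF a] by simp
      ultimately show "\<rho> \<notin> I a" by simp
    qed
    have 3: "ll (mm a) \<in> I a" using Ir[OF a] by auto
    show "I a \<subseteq> L \<and> (a \<noteq> 0 \<longrightarrow> \<rho> \<notin> I a) \<and> ll (mm a) \<in> I a" using 1 2 3 by blast
  qed
  have gB: "gB I" unfolding gB_def
  proof (intro allI impI)
    fix a b assume ab: "a \<le> KK" "b \<le> KK" "a \<noteq> b"
    have "ll (mm a) \<noteq> ll (mm b)"
    proof
      assume "ll (mm a) = ll (mm b)"
      then have "mm a = mm b" using ll_inj[OF mm_lt[OF ab(1)] mm_lt[OF ab(2)]] by blast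
      then show False using mm_inj[OF ab(1,2)] ab(3) by blast
    qed
    then have ne: "{ll (mm a)} \<inter> {ll (mm b)} = {}" by simp
    have "I a \<inter> I b \<subseteq> insert \<rho> ((I a - {\<rho>}) \<inter> (I b - {\<rho>}))" by blast
    also have "\<dots> = insert \<rho> ({ll (mm a)} \<inter> {ll (mm b)})" unfolding Ir[OF ab(1)] Ir[OF ab(2)] ..
    also have "\<dots> = {\<rho>}" unfolding ne by simp
    finally show "I a \<inter> I b \<subseteq> {\<rho>}" .
  qed
  have gC: "gC 1 I" unfolding gC_def
  proof (intro ballI impI)
    fix y assume y: "y \<in> L - {\<rho>}" "\<sigma> y < 1"
    then have "y = ll 0" using ll_sig[OF y(1)] by simp
    then show "\<exists>a\<le>KK. y \<in> I a" using I0 by auto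
  qed
  have gD: "gD 1 I" unfolding gD_def
  proof (intro allI impI ballI)
    fix a y assume "a \<le> KK" "y \<in> I a - {\<rho>}"
    then have "y \<in> {ll (mm a)}" unfolding Ir[OF \<open>a \<le> KK\<close>] by simp
    then have "y = ll (mm a)" by simp
    then show "\<sigma> y < 1 \<or> y = ll (mm a)" by simp
  qed
  have gE: "gE I" unfolding gE_def
  proof (intro allI impI)
    fix a assume a: "1 \<le> a \<and> a \<le> KK"
    then have Ie: "I a = {ll (mm a)}" using Ia by auto
    have "ll (mm a) \<in> lv T" using llmL a lvT by auto
    then have "lv (lca {ll (mm a)} T) = {ll (mm a)}" using lca_single[OF distT] by blast
    moreover have "\<sigma> (ll (mm a)) = mm a" using sig_ll[OF mm_lt] a by blast
    ultimately show "loc a (I a)" unfolding loc_def Ie by simp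
  qed
  have "ginv 1 I" unfolding ginv_def using gA gB gC gD gE by blast
  then show ?thesis unfolding I_def .
qed

lemma span_el:
  assumes a: "a \<le> KK" and G: "gA Ls" and c: "c \<in> span L \<rho> \<sigma> Ts (Ls a) a"
  shows "\<exists>y\<in>Ls a - {\<rho>}. c = int (\<sigma> y) \<or> c = - int (\<sigma> y)"
proof -
  have "ll (mm a) \<in> Ls a" "ll (mm a) \<in> L - {\<rho>}" "\<sigma> (ll (mm a)) = mm a"
    using G a ll_in sig_ll mm_lt unfolding gA_def by auto
  note h = this
  from c[unfolded span_iff] show ?thesis
  proof
    assume "c = int (mm a)"
    then show ?thesis using h by (intro bexI[of _ "ll (mm a)"]) auto
  next
    assume "\<exists>x\<in>Ls a - {ll (mm a), \<rho>}. c = int (\<sigma> x) \<or> c = - int (\<sigma> x)"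
    then show ?thesis by blast
  qed
qed

lemma step_inv:
  assumes j: "1 \<le> j" "j < nn" and G: "ginv j Ls"
  shows "ginv (Suc j) (cstep L \<rho> \<sigma> Ts Ls j)"
proof (cases "j \<in> MM")
  case True
  then have cs: "cstep L \<rho> \<sigma> Ts Ls j = Ls" by (simp add: cstep_def)
  have "gC (Suc j) Ls" unfolding gC_def
  proof (intro ballI impI)
    fix y assume y: "y \<in> L - {\<rho>}" "\<sigma> y < Suc j"
    show "\<exists>a\<le>KK. y \<in> Ls a"
    proof (cases "\<sigma> y < j")
      case True then show ?thesis using G y unfolding ginv_def gC_def by blast
    next
      case False
      then have "\<sigma> y = j" using y(2) by simp
      then have "y = ll j" using ll_sig[OF y(1)] by simp
      moreover obtain a where "1 \<le> a" "a \<le> KK" "mm a = j" using mm_surj True by blast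
      moreover have "ll (mm a) \<in> Ls a" using G \<open>a \<le> KK\<close> unfolding ginv_def gA_def by blast
      ultimately show ?thesis using \<open>a \<le> KK\<close> \<open>mm a = j\<close> by blast
    qed
  qed
  moreover have "gD (Suc j) Ls" unfolding gD_def
  proof (intro allI impI ballI)
    fix a y assume "a \<le> KK" "y \<in> Ls a - {\<rho>}"
    then have "\<sigma> y < j \<or> y = ll (mm a)" using G unfolding ginv_def gD_def by blast
    then show "\<sigma> y < Suc j \<or> y = ll (mm a)" by auto
  qed
  ultimately show ?thesis using G cs unfolding ginv_def by simp
next
  case False
  have GA: "gA Ls" and GB: "gB Ls" and GC: "gC j Ls" and GD: "gD j Ls" and GE: "gE Ls"
    using G unfolding ginv_def by auto
  have nm: "\<not> mis_cond L \<rho> \<sigma> Ts (Mset L \<rho> \<sigma> Ts (j-1)) j" using memM j False by blast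
  have allc: "\<forall>T'\<in>Ts. ola L \<rho> \<sigma> T' j = ola L \<rho> \<sigma> T j" using nm TinTs unfolding mis_cond_def by blast
  have cv: "cval L \<rho> \<sigma> Ts j = ola L \<rho> \<sigma> T j"
    unfolding cval_def using allc someI[of "\<lambda>T. T \<in> Ts", OF TinTs] by blast
  define c where "c = ola L \<rho> \<sigma> T j"
  have notneg: "c \<noteq> - int k" if k: "k \<in> MM" "k < j" for k
  proof
    assume ck: "c = - int k"
    have "k \<in> Mset L \<rho> \<sigma> Ts (j-1)" using Mset_prev[OF j(2)] k by auto
    moreover have "\<forall>T'\<in>Ts. ola L \<rho> \<sigma> T' j = - int k" using allc ck c_def by simp
    ultimately have "mis_cond L \<rho> \<sigma> Ts (Mset L \<rho> \<sigma> Ts (j-1)) j"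
      unfolding mis_cond_def by blast
    then show False using nm by blast
  qed
  obtain s t1 t2 where st: "ola L \<rho> \<sigma> T j = vidx \<sigma> s" "Node t1 t2 \<in> subs T \<or> Node t2 t1 \<in> subs T"
    "lv t1 \<inter> AA j = {ll j}" "lv s = lv t2 \<inter> AA j" "distinct (leaves s)"
    "\<And>d1 d2. s = Node d1 d2 \<Longrightarrow> \<exists>D1 D2. Node D1 D2 \<in> subs T \<and> lv d1 = lv D1 \<inter> AA j \<and> lv d2 = lv D2 \<inter> AA j"
    using sib_struct[OF j] by blast
  have ljL: "ll j \<in> L-{\<rho>}" "\<sigma> (ll j) = j" using ll_in sig_ll j by auto
  have dt: "lv t1 \<inter> lv t2 = {}" using st(2) node_disj[OF _ distT] by blast
  have sL: "lv s \<subseteq> L - {\<rho>}" using st(4) AA_sub[OF j(2)] by auto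
  have slt: "\<sigma> y < j" if y: "y \<in> lv s" for y
  proof -
    have yL: "y \<in> L - {\<rho>}" using y sL by auto
    have "\<sigma> y \<le> j" using inA[OF j(2) yL] y st(4) by auto
    moreover have "y \<noteq> ll j" using y st(3,4) dt by auto
    then have "\<sigma> y \<noteq> j" using ll_sig[OF yL] by auto
    ultimately show ?thesis by simp
  qed
  have injs_s: "inj_on \<sigma> (lv s)" using injs sL inj_on_subset by blast
  have uniq: "a = b" if ab: "a \<le> KK" "b \<le> KK" "c \<in> span L \<rho> \<sigma> Ts (Ls a) a" "c \<in> span L \<rho> \<sigma> Ts (Ls b) b" for a b
  proof -
    obtain ya where ya: "ya \<in> Ls a - {\<rho>}" "c = int (\<sigma> ya) \<or> c = - int (\<sigma> ya)" using span_el[OF ab(1) GA ab(3)] by blast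
    obtain yb where yb: "yb \<in> Ls b - {\<rho>}" "c = int (\<sigma> yb) \<or> c = - int (\<sigma> yb)" using span_el[OF ab(2) GA ab(4)] by blast
    have "ya \<in> L - {\<rho>}" "yb \<in> L - {\<rho>}" using ya yb GA ab unfolding gA_def by auto
    moreover have "\<sigma> ya = \<sigma> yb" using ya(2) yb(2) by auto
    ultimately have "ya = yb" using sig_eq by blast
    then show "a = b" using GB ab ya yb unfolding gB_def by blast
  qed
  have ex: "\<exists>a\<le>KK. c \<in> span L \<rho> \<sigma> Ts (Ls a) a"
  proof (cases s)
    case (Leaf y)
    have yL: "y \<in> L - {\<rho>}" using sL Leaf by auto
    have cy: "c = int (\<sigma> y)" using st(1) Leaf c_def by simp
    obtain a where a: "a \<le> KK" "y \<in> Ls a" using GC yL slt[of y] Leaf unfolding gC_def by auto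
    show ?thesis
    proof (cases "y = ll (mm a)")
      case True
      then have "c = int (mm a)" using cy sig_ll mm_lt a by simp
      then have "c \<in> span L \<rho> \<sigma> Ts (Ls a) a" unfolding span_iff by blast
      then show ?thesis using a(1) by blast
    next
      case False
      then have "y \<in> Ls a - {ll (mm a), \<rho>}" using a yL by blast
      then have "c \<in> span L \<rho> \<sigma> Ts (Ls a) a" unfolding span_iff using cy by blast
      then show ?thesis using a(1) by blast
    qed
  next
    case (Node d1 d2)
    obtain x where x: "vidx \<sigma> (Node d1 d2) = - int (\<sigma> x)" "\<sigma> x \<ge> 1"
      "(x \<in> lv d1 \<and> (\<forall>y\<in>lv d1. \<sigma> x \<le> \<sigma> y) \<and> (\<exists>w\<in>lv d2. \<sigma> w < \<sigma> x)) \<or>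
       (x \<in> lv d2 \<and> (\<forall>y\<in>lv d2. \<sigma> x \<le> \<sigma> y) \<and> (\<exists>w\<in>lv d1. \<sigma> w < \<sigma> x))"
      using vidx_node[of d1 d2 \<sigma>] st(5) injs_s Node by blast
    have cx: "c = - int (\<sigma> x)" using st(1) x(1) Node c_def by simp
    have xs: "x \<in> lv s" using x(3) Node by auto
    have xL: "x \<in> L - {\<rho>}" using xs sL by auto
    have xj: "\<sigma> x < j" using slt xs by blast
    have xM: "\<sigma> x \<notin> MM" using notneg xj cx by blast
    obtain a where a: "a \<le> KK" "x \<in> Ls a" using GC xL xj unfolding gC_def by auto
    have "x \<noteq> ll (mm a)"
    proof
      assume "x = ll (mm a)"
      then have "\<sigma> x = mm a" using sig_ll mm_lt a by simp
      then show False using xM x(2) mm_in[of a] a mm0 by (cases "a = 0") auto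
    qed
    then have "x \<in> Ls a - {ll (mm a), \<rho>}" using a xL by blast
    then have "c \<in> span L \<rho> \<sigma> Ts (Ls a) a" unfolding span_iff using cx by blast
    then show ?thesis using a(1) by blast
  qed
  define i0 where "i0 = (THE a. a \<le> KK \<and> cval L \<rho> \<sigma> Ts j \<in> span L \<rho> \<sigma> Ts (Ls a) a)"
  have eu: "\<exists>!a. a \<le> KK \<and> c \<in> span L \<rho> \<sigma> Ts (Ls a) a"
  proof (rule ex_ex1I)
    show "\<exists>a. a \<le> KK \<and> c \<in> span L \<rho> \<sigma> Ts (Ls a) a" using ex by blast
  next
    fix a b assume "a \<le> KK \<and> c \<in> span L \<rho> \<sigma> Ts (Ls a) a" "b \<le> KK \<and> c \<in> span L \<rho> \<sigma> Ts (Ls b) b"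
    then show "a = b" using uniq by blast
  qed
  have cvc: "cval L \<rho> \<sigma> Ts j = c" using cv c_def by simp
  have i0': "i0 = (THE a. a \<le> KK \<and> c \<in> span L \<rho> \<sigma> Ts (Ls a) a)" unfolding i0_def cvc ..
  have i0: "i0 \<le> KK" "c \<in> span L \<rho> \<sigma> Ts (Ls i0) i0"
    using theI'[OF eu] unfolding i0'[symmetric] by auto
  have cs: "cstep L \<rho> \<sigma> Ts Ls j = Ls(i0 := insert (ll j) (Ls i0))"
    unfolding cstep_def i0_def using False by (simp add: Let_def)
  define Ls' where "Ls' = Ls(i0 := insert (ll j) (Ls i0))"
  have new: "ll j \<notin> Ls b" if b: "b \<le> KK" for b
  proof
    assume h: "ll j \<in> Ls b"
    then have "ll j \<in> Ls b - {\<rho>}" using ljL by blast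
    then have "\<sigma> (ll j) < j \<or> ll j = ll (mm b)" using GD b unfolding gD_def by blast
    then have "ll j = ll (mm b)" using ljL by simp
    then have "j = mm b" using ll_inj[OF j(2) mm_lt[OF b]] by blast
    then show False using False mm_in[of b] b mm0 j(1) by (cases "b = 0") auto
  qed
  have gA': "gA Ls'" using GA ljL unfolding gA_def Ls'_def by auto
  have gB': "gB Ls'" unfolding gB_def
  proof (intro allI impI)
    fix a b assume ab: "a \<le> KK" "b \<le> KK" "a \<noteq> b"
    show "Ls' a \<inter> Ls' b \<subseteq> {\<rho>}"
      using GB ab new[OF ab(1)] new[OF ab(2)] unfolding gB_def Ls'_def by auto
  qed
  have gC': "gC (Suc j) Ls'" unfolding gC_def
  proof (intro ballI impI)
    fix y assume y: "y \<in> L - {\<rho>}" "\<sigma> y < Suc j"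
    show "\<exists>a\<le>KK. y \<in> Ls' a"
    proof (cases "\<sigma> y < j")
      case True
      then obtain a where "a \<le> KK" "y \<in> Ls a" using GC y unfolding gC_def by blast
      then show ?thesis unfolding Ls'_def by (intro exI[of _ a]) auto
    next
      case False
      then have "\<sigma> y = j" using y(2) by simp
      then have "y = ll j" using ll_sig[OF y(1)] by simp
      then show ?thesis using i0 unfolding Ls'_def by (intro exI[of _ i0]) auto
    qed
  qed
  have gD': "gD (Suc j) Ls'" unfolding gD_def
  proof (intro allI impI ballI)
    fix a y assume a: "a \<le> KK" "y \<in> Ls' a - {\<rho>}"
    show "\<sigma> y < Suc j \<or> y = ll (mm a)"
    proof (cases "y \<in> Ls a")
      case True
      then have "\<sigma> y < j \<or> y = ll (mm a)" using GD a unfolding gD_def by blast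
      then show ?thesis by auto
    next
      case False
      then have "y = ll j" using a unfolding Ls'_def by (auto split: if_splits)
      then show ?thesis using ljL by simp
    qed
  qed
  have gE': "gE Ls'" unfolding gE_def
  proof (intro allI impI)
    fix a assume a: "1 \<le> a \<and> a \<le> KK"
    show "loc a (Ls' a)"
    proof (cases "a = i0")
      case True
      have "Ls a \<subseteq> L - {\<rho>}" "ll (mm a) \<in> Ls a" using GA a unfolding gA_def by auto
      moreover have "loc a (Ls a)" using GE a unfolding gE_def by auto
      moreover have "ola L \<rho> \<sigma> T j \<in> span L \<rho> \<sigma> Ts (Ls a) a" using i0(2) True c_def by simp
      ultimately have "loc a (insert (ll j) (Ls a))" using loc_step[OF j, of a "Ls a"] a by blast
      moreover have "Ls' a = insert (ll j) (Ls a)" unfolding Ls'_def using True by simp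
      ultimately show ?thesis by simp
    next
      case False
      then show ?thesis using GE a unfolding gE_def Ls'_def by auto
    qed
  qed
  have "ginv (Suc j) Ls'" unfolding ginv_def using gA' gB' gC' gD' gE' by blast
  moreover have "cstep L \<rho> \<sigma> Ts Ls j = Ls'" using cs unfolding Ls'_def .
  ultimately show ?thesis by simp
qed

lemma fold_inv: "1 \<le> j \<Longrightarrow> j \<le> nn \<Longrightarrow> ginv j (foldl (cstep L \<rho> \<sigma> Ts) (init_sets L \<rho> \<sigma> Ts) [1..<j])"
proof (induction j)
  case 0
  then show ?case by simp
next
  case (Suc j)
  show ?case
  proof (cases "j = 0")
    case True
    then show ?thesis using init_inv by simp
  next
    case False
    then have "[1..<Suc j] = [1..<j] @ [j]" by simp
    then show ?thesis using Suc step_inv[of j] False by simp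
  qed
qed

lemma final_inv: "ginv nn (leafsets L \<rho> \<sigma> Ts)"
  unfolding leafsets_def using fold_inv nn_pos by blast

lemma main: "i \<le> KK \<Longrightarrow> \<forall>j < mm i. ll j \<notin> top_subtree_leaves \<rho> (leafsets L \<rho> \<sigma> Ts i) T"
proof (cases "i = 0")
  case True
  then show ?thesis by (simp add: mm0)
next
  case False
  assume i: "i \<le> KK"
  have G: "gA (leafsets L \<rho> \<sigma> Ts)" "gE (leafsets L \<rho> \<sigma> Ts)" using final_inv unfolding ginv_def by auto
  have r: "\<rho> \<notin> leafsets L \<rho> \<sigma> Ts i" using G(1) i False unfolding gA_def by auto
  have l: "loc i (leafsets L \<rho> \<sigma> Ts i)" using G(2) i False unfolding gE_def by auto
  show ?thesis
  proof (intro allI impI)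
    fix j assume j: "j < mm i"
    then have "j < nn" using mm_lt[OF i] by simp
    then have "\<sigma> (ll j) = j" using sig_ll by simp
    show "ll j \<notin> top_subtree_leaves \<rho> (leafsets L \<rho> \<sigma> Ts i) T"
    proof
      assume "ll j \<in> top_subtree_leaves \<rho> (leafsets L \<rho> \<sigma> Ts i) T"
      then have "ll j \<in> lv (lca (leafsets L \<rho> \<sigma> Ts i) T)" using r unfolding top_subtree_leaves_def by simp
      then have "mm i \<le> \<sigma> (ll j)" using l unfolding loc_def by blast
      then show False using j \<open>\<sigma> (ll j) = j\<close> by simp
    qed
  qed
qed

end

theorem lemma4:
  fixes L :: "'a set" and \<rho> :: 'a and \<sigma> :: "'a \<Rightarrow> nat"
    and Ts :: "'a btree set" and T :: "'a btree" and i :: nat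
  assumes "finite L" and "\<rho> \<in> L"
    and "finite Ts" and "card Ts \<ge> 2"
    and "\<forall>T'\<in>Ts. is_tree_over L \<rho> T'"
    and "bij_betw \<sigma> (L - {\<rho>}) {0..<nleaves L \<rho>}"
    and "T \<in> Ts"
    and "i \<le> card (mismatched L \<rho> \<sigma> Ts)"
  shows "\<forall>j < mi L \<rho> \<sigma> Ts i.
           lab L \<rho> \<sigma> j \<notin> top_subtree_leaves \<rho> (leafsets L \<rho> \<sigma> Ts i) T"
proof -
  interpret setting L \<rho> \<sigma> Ts T using assms by unfold_locales auto
  show ?thesis using main assms(8) by blast
qed


end
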